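(* Let $\Omega\subset\mathbb{R}^2$ be open and $u\in C^4(\Omega)$, $Q=\sqrt{1+|\nabla u|^2}$, $H=\operatorname{div}(\nabla u/Q)$. Then $$\operatorname{div}\Big(\frac1Q\Big(I-\frac{\nabla u\otimes\nabla u}{Q^2}\Big)\nabla(QH)-\frac{H^2}{2Q}\nabla u\Big)=\Delta^2u-D_ib_1^i[u]-D^2_{ij}b_2^{ij}[u]\quad\text{in }\Omega,$$ where, for suitable fixed contractions with universal constant coefficients (independent of $u$ and $\Omega$), $$b_1[u]=D^2u\star D^2u\star\sum_{k=1}^3Q^{-2k-1}P_{2k-1}(\nabla u),\qquad b_2[u]=D^2u\star\sum_{k=1}^2Q^{-2k-1}P_{2k}(\nabla u)+D^2u\star P_2(\nabla u)\star\big(Q(1+Q)\big)^{-1}.$$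
   Context: Summation convention over repeated indices. The symbol $\star$ denotes a linear combination with constant real coefficients of contractions of the tensors involved (e.g. $|\nabla u|^2=\nabla u\star\nabla u$), and $P_\ell(\nabla u)=\nabla u\star\cdots\star\nabla u$ with $\ell$ factors. The left-hand side is the graphical Willmore operator $\Delta_{\Gamma(u)}H+\tfrac12H^3-2H\mathcal K$ written in divergence form. *)

theory Defs
  imports "HOL-Analysis.Analysis"
begin

definition pd :: "2 \<Rightarrow> (real^2 \<Rightarrow> real) \<Rightarrow> real^2 \<Rightarrow> real" where
  "pd i f x = deriv (\<lambda>t. f (x + t *\<^sub>R axis i 1)) 0"

fun Ck :: "nat \<Rightarrow> (real^2) set \<Rightarrow> (real^2 \<Rightarrow> real) \<Rightarrow> bool" where
  "Ck 0 \<Omega> f = continuous_on \<Omega> f"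
| "Ck (Suc k) \<Omega> f = (continuous_on \<Omega> f \<and>
      (\<forall>i. \<forall>x\<in>\<Omega>. (\<lambda>t. f (x + t *\<^sub>R axis i 1)) differentiable (at 0)) \<and>
      (\<forall>i. Ck k \<Omega> (pd i f)))"

definition idx_lists :: "nat \<Rightarrow> 2 list set" where
  "idx_lists m = {js. length js = m}"

text \<open>Perfect matchings of the slots 0..m-1, as fixed-point-free involutions.\<close>
definition pairings :: "nat \<Rightarrow> (nat \<Rightarrow> nat) set" where
  "pairings m = {\<sigma>. (\<forall>p<m. \<sigma> p < m \<and> \<sigma> (\<sigma> p) = p \<and> \<sigma> p \<noteq> p) \<and> (\<forall>p\<ge>m. \<sigma> p = p)}"

text \<open>Coefficient tensors of a linear combination (constant real coefficients) of
  full contractions: span of products of Kronecker deltas over perfect matchings of the slots.\<close>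
definition contraction_tensor :: "nat \<Rightarrow> (2 list \<Rightarrow> real) \<Rightarrow> bool" where
  "contraction_tensor m T \<longleftrightarrow> (\<exists>c. \<forall>js\<in>idx_lists m.
     T js = (\<Sum>\<sigma>\<in>pairings m. c \<sigma> * (if \<forall>p<m. js ! p = js ! (\<sigma> p) then 1 else 0)))"

definition Qf :: "(real^2 \<Rightarrow> real) \<Rightarrow> real^2 \<Rightarrow> real" where
  "Qf u x = sqrt (1 + (\<Sum>i\<in>UNIV. (pd i u x)\<^sup>2))"

definition Hf :: "(real^2 \<Rightarrow> real) \<Rightarrow> real^2 \<Rightarrow> real" where
  "Hf u x = (\<Sum>i\<in>UNIV. pd i (\<lambda>y. pd i u y / Qf u y) x)"

definition willmore_lhs :: "(real^2 \<Rightarrow> real) \<Rightarrow> real^2 \<Rightarrow> real" where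
  "willmore_lhs u x = (\<Sum>j\<in>UNIV. pd j (\<lambda>y.
      (\<Sum>l\<in>UNIV. (1 / Qf u y) * ((if j = l then 1 else 0) - pd j u y * pd l u y / (Qf u y)\<^sup>2)
                   * pd l (\<lambda>z. Qf u z * Hf u z) y)
      - (Hf u y)\<^sup>2 / (2 * Qf u y) * pd j u y) x)"

definition bilap :: "(real^2 \<Rightarrow> real) \<Rightarrow> real^2 \<Rightarrow> real" where
  "bilap u x = (\<Sum>i\<in>UNIV. \<Sum>j\<in>UNIV. pd i (pd i (pd j (pd j u))) x)"

definition b1 :: "(nat \<Rightarrow> 2 list \<Rightarrow> real) \<Rightarrow> (real^2 \<Rightarrow> real) \<Rightarrow> real^2 \<Rightarrow> 2 \<Rightarrow> real" where
  "b1 T1 u x i = (\<Sum>k\<in>{1,2,3::nat}.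
     (\<Sum>js\<in>idx_lists (4 + (2*k - 1)). T1 k (i # js)
        * pd (js!0) (pd (js!1) u) x * pd (js!2) (pd (js!3) u) x
        * (\<Prod>p<2*k - 1. pd (js!(4+p)) u x)) / (Qf u x) ^ (2*k + 1))"

definition b2 :: "(nat \<Rightarrow> 2 list \<Rightarrow> real) \<Rightarrow> (2 list \<Rightarrow> real) \<Rightarrow> (real^2 \<Rightarrow> real) \<Rightarrow> real^2 \<Rightarrow> 2 \<Rightarrow> 2 \<Rightarrow> real" where
  "b2 T2 T3 u x i j =
     (\<Sum>k\<in>{1,2::nat}.
        (\<Sum>js\<in>idx_lists (2 + 2*k). T2 k (i # j # js)
           * pd (js!0) (pd (js!1) u) x * (\<Prod>p<2*k. pd (js!(2+p)) u x)) / (Qf u x) ^ (2*k + 1))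
   + (\<Sum>js\<in>idx_lists 4. T3 (i # j # js)
        * pd (js!0) (pd (js!1) u) x * pd (js!2) u x * pd (js!3) u x) / (Qf u x * (1 + Qf u x))"

end

theory Submission
  imports Defs
begin


definition LD :: "(real^2) set \<Rightarrow> (real^2 \<Rightarrow> real) \<Rightarrow> bool" where
  "LD S f \<longleftrightarrow> (\<forall>y\<in>S. \<forall>i. (\<lambda>t. f (y + t *\<^sub>R axis i 1)) differentiable (at 0))"

lemma LD_D: "LD S f \<Longrightarrow> y \<in> S \<Longrightarrow> ((\<lambda>t. f (y + t *\<^sub>R axis i 1)) has_real_derivative pd i f y) (at 0)"
  unfolding LD_def pd_def using DERIV_deriv_iff_real_differentiable by blast

lemma pd_eqI: "((\<lambda>t. f (y + t *\<^sub>R axis i 1)) has_real_derivative D) (at 0) \<Longrightarrow> pd i f y = D"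
  unfolding pd_def by (rule DERIV_imp_deriv)

lemma LD_I: "(\<And>y i. y\<in>S \<Longrightarrow> \<exists>D. ((\<lambda>t. f (y + t *\<^sub>R axis i 1)) has_real_derivative D) (at 0)) \<Longrightarrow> LD S f"
  unfolding LD_def real_differentiable_def by blast

lemma LD_const: "LD S (\<lambda>y. c)"
  by (rule LD_I) (auto intro: DERIV_const)

lemma pd_const: "pd i (\<lambda>y. c) y = 0"
  by (rule pd_eqI) simp

lemma LD_add: assumes "LD S f" "LD S g" shows "LD S (\<lambda>y. f y + g y)"
  by (rule LD_I, rule exI, rule DERIV_add[OF LD_D[OF assms(1)] LD_D[OF assms(2)]])
lemma pd_add: "LD S f \<Longrightarrow> LD S g \<Longrightarrow> y \<in> S \<Longrightarrow> pd i (\<lambda>y. f y + g y) y = pd i f y + pd i g y"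
  by (rule pd_eqI, rule DERIV_add[OF LD_D LD_D, simplified])

lemma LD_diff: assumes "LD S f" "LD S g" shows "LD S (\<lambda>y. f y - g y)"
  by (rule LD_I, rule exI, rule DERIV_diff[OF LD_D[OF assms(1)] LD_D[OF assms(2)]])
lemma pd_diff: "LD S f \<Longrightarrow> LD S g \<Longrightarrow> y \<in> S \<Longrightarrow> pd i (\<lambda>y. f y - g y) y = pd i f y - pd i g y"
  by (rule pd_eqI, rule DERIV_diff[OF LD_D LD_D, simplified])

lemma LD_minus: assumes "LD S f" shows "LD S (\<lambda>y. - f y)"
  by (rule LD_I, rule exI, rule DERIV_minus[OF LD_D[OF assms]])
lemma pd_minus: "LD S f \<Longrightarrow> y \<in> S \<Longrightarrow> pd i (\<lambda>y. - f y) y = - pd i f y"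
  by (rule pd_eqI, rule DERIV_minus[OF LD_D, simplified])

lemma LD_mult: assumes "LD S f" "LD S g" shows "LD S (\<lambda>y. f y * g y)"
  by (rule LD_I, rule exI, rule DERIV_mult[OF LD_D[OF assms(1)] LD_D[OF assms(2)]])
lemma pd_mult: "LD S f \<Longrightarrow> LD S g \<Longrightarrow> y \<in> S \<Longrightarrow> pd i (\<lambda>y. f y * g y) y = pd i f y * g y + f y * pd i g y"
proof (rule pd_eqI)
  assume a: "LD S f" "LD S g" "y \<in> S"
  show "((\<lambda>t. f (y + t *\<^sub>R axis i 1) * g (y + t *\<^sub>R axis i 1)) has_real_derivative pd i f y * g y + f y * pd i g y) (at 0)"
    using DERIV_mult[OF LD_D[OF a(1,3)] LD_D[OF a(2,3)]] by (simp add: mult.commute)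
qed

lemma LD_divide: "LD S f \<Longrightarrow> LD S g \<Longrightarrow> (\<forall>z\<in>S. g z \<noteq> 0) \<Longrightarrow> LD S (\<lambda>y. f y / g y)"
proof (rule LD_I)
  fix y i assume a: "LD S f" "LD S g" "\<forall>z\<in>S. g z \<noteq> 0" "y \<in> S"
  show "\<exists>D. ((\<lambda>t. f (y + t *\<^sub>R axis i 1) / g (y + t *\<^sub>R axis i 1)) has_real_derivative D) (at 0)"
    using DERIV_divide[OF LD_D[OF a(1,4)] LD_D[OF a(2,4)]] a by auto
qed
lemma pd_divide: "LD S f \<Longrightarrow> LD S g \<Longrightarrow> (\<forall>z\<in>S. g z \<noteq> 0) \<Longrightarrow> y \<in> S \<Longrightarrow>
   pd i (\<lambda>y. f y / g y) y = (pd i f y * g y - f y * pd i g y) / (g y)^2"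
proof (rule pd_eqI)
  assume a: "LD S f" "LD S g" "\<forall>z\<in>S. g z \<noteq> 0" "y \<in> S"
  show "((\<lambda>t. f (y + t *\<^sub>R axis i 1) / g (y + t *\<^sub>R axis i 1)) has_real_derivative (pd i f y * g y - f y * pd i g y) / (g y)^2) (at 0)"
    using DERIV_divide[OF LD_D[OF a(1,4)] LD_D[OF a(2,4)]] a by (simp add: power2_eq_square)
qed

lemma LD_power: assumes "LD S f" shows "LD S (\<lambda>y. f y ^ n)"
  by (rule LD_I, rule exI, rule DERIV_power[OF LD_D[OF assms]])
lemma pd_power: "LD S f \<Longrightarrow> y \<in> S \<Longrightarrow> pd i (\<lambda>y. f y ^ n) y = of_nat n * pd i f y * f y ^ (n - 1)"
proof (rule pd_eqI)
  assume a: "LD S f" "y \<in> S"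
  show "((\<lambda>t. f (y + t *\<^sub>R axis i 1) ^ n) has_real_derivative of_nat n * pd i f y * f y ^ (n - 1)) (at 0)"
    using DERIV_power[OF LD_D[OF a]] by (simp add: mult.assoc)
qed

lemma LD_sqrt: "LD S f \<Longrightarrow> (\<forall>z\<in>S. f z > 0) \<Longrightarrow> LD S (\<lambda>y. sqrt (f y))"
proof (rule LD_I)
  fix y i assume a: "LD S f" "\<forall>z\<in>S. f z > 0" "y \<in> S"
  show "\<exists>D. ((\<lambda>t. sqrt (f (y + t *\<^sub>R axis i 1))) has_real_derivative D) (at 0)"
  proof
    have s: "(sqrt has_real_derivative inverse (sqrt (f y))/2) (at ((\<lambda>t. f (y + t *\<^sub>R axis i 1)) 0))"
      using DERIV_real_sqrt a by simp
    show "((\<lambda>t. sqrt (f (y + t *\<^sub>R axis i 1))) has_real_derivative (inverse (sqrt (f y))/2) * pd i f y) (at 0)"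
      using DERIV_chain2[OF s LD_D[OF a(1,3)]] by simp
  qed
qed
lemma pd_sqrt: "LD S f \<Longrightarrow> (\<forall>z\<in>S. f z > 0) \<Longrightarrow> y \<in> S \<Longrightarrow>
   pd i (\<lambda>y. sqrt (f y)) y = pd i f y / (2 * sqrt (f y))"
proof (rule pd_eqI)
  assume a: "LD S f" "\<forall>z\<in>S. f z > 0" "y \<in> S"
  show "((\<lambda>t. sqrt (f (y + t *\<^sub>R axis i 1))) has_real_derivative pd i f y / (2 * sqrt (f y))) (at 0)"
  proof -
    have s: "(sqrt has_real_derivative inverse (sqrt (f y))/2) (at ((\<lambda>t. f (y + t *\<^sub>R axis i 1)) 0))"
      using DERIV_real_sqrt a by simp
    show ?thesis
      using DERIV_chain2[OF s LD_D[OF a(1,3)]] by (simp add: divide_simps mult.commute)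
  qed
qed

lemma LD_sum: "finite A \<Longrightarrow> (\<And>a. a \<in> A \<Longrightarrow> LD S (f a)) \<Longrightarrow> LD S (\<lambda>y. \<Sum>a\<in>A. f a y)"
proof (rule LD_I)
  fix y i assume a: "finite A" "\<And>a. a \<in> A \<Longrightarrow> LD S (f a)" "y \<in> S"
  show "\<exists>D. ((\<lambda>t. \<Sum>a\<in>A. f a (y + t *\<^sub>R axis i 1)) has_real_derivative D) (at 0)"
    using DERIV_sum[of A "\<lambda>t a. f a (y + t *\<^sub>R axis i 1)" "\<lambda>a. pd i (f a) y"] LD_D a by blast
qed
lemma pd_sum: "finite A \<Longrightarrow> (\<And>a. a \<in> A \<Longrightarrow> LD S (f a)) \<Longrightarrow> y \<in> S \<Longrightarrow>
   pd i (\<lambda>y. \<Sum>a\<in>A. f a y) y = (\<Sum>a\<in>A. pd i (f a) y)"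
  by (rule pd_eqI) (rule DERIV_sum, blast intro: LD_D)

lemma near_open:
  fixes S :: "(real^2) set" and i :: 2
  assumes "open S" "y \<in> S"
  shows "eventually (\<lambda>t::real. y + t *\<^sub>R axis i 1 \<in> S) (nhds 0)"
proof -
  have "open ((\<lambda>t::real. y + t *\<^sub>R axis i 1) -` S)"
    by (rule continuous_open_vimage[OF assms(1)]) (intro continuous_intros)
  then have "open {t::real. y + t *\<^sub>R axis i 1 \<in> S}" by (simp add: vimage_def)
  moreover have "0 \<in> {t::real. y + t *\<^sub>R axis i 1 \<in> S}" using assms by simp
  ultimately show ?thesis by (rule eventually_nhds_in_open[THEN eventually_mono]) auto
qed

lemma pd_cong:
  fixes S :: "(real^2) set"
  assumes "open S" "y \<in> S" "\<And>z. z \<in> S \<Longrightarrow> f z = g z"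
  shows "pd i f y = pd i g y"
  unfolding pd_def
  by (rule deriv_cong_ev[OF eventually_mono[OF near_open[OF assms(1,2), of i]]]) (auto simp: assms(3))

lemma LD_cong:
  fixes S :: "(real^2) set"
  assumes "open S" "\<And>z. z \<in> S \<Longrightarrow> f z = g z" "LD S g"
  shows "LD S f"
proof (rule LD_I)
  fix y i assume y: "y \<in> S"
  have "open ((\<lambda>t::real. y + t *\<^sub>R axis i 1) -` S)"
    by (rule continuous_open_vimage[OF assms(1)]) (intro continuous_intros)
  then have o: "open {t::real. y + t *\<^sub>R axis i 1 \<in> S}" by (simp add: vimage_def)
  show "\<exists>D. ((\<lambda>t. f (y + t *\<^sub>R axis i 1)) has_real_derivative D) (at 0)"
    apply (rule exI)
    apply (rule has_field_derivative_transform_within_open[OF LD_D[OF assms(3) y] o])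
    using y assms(2) by auto
qed

definition LD2 :: "(real^2) set \<Rightarrow> (real^2 \<Rightarrow> real) \<Rightarrow> bool" where
  "LD2 S f \<longleftrightarrow> LD S f \<and> (\<forall>i. LD S (pd i f))"

lemma LD2_LD: "LD2 S f \<Longrightarrow> LD S f" unfolding LD2_def by blast
lemma LD2_pd: "LD2 S f \<Longrightarrow> LD S (pd i f)" unfolding LD2_def by blast

lemma LD2_cong:
  fixes S :: "(real^2) set"
  assumes "open S" "\<And>z. z \<in> S \<Longrightarrow> f z = g z" "LD2 S g"
  shows "LD2 S f"
  unfolding LD2_def
proof safe
  show "LD S f" by (rule LD_cong[OF assms(1) assms(2) LD2_LD[OF assms(3)]])
  fix i
  show "LD S (pd i f)"
    by (rule LD_cong[OF assms(1), where g="pd i g"]) (auto intro: pd_cong[OF assms(1)] assms(2) LD2_pd[OF assms(3)])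
qed

lemma LD2_const: "LD2 S (\<lambda>y. c)"
proof -
  have "\<And>i. pd i (\<lambda>y. c) = (\<lambda>y. 0)" by (rule ext) (rule pd_const)
  then show ?thesis unfolding LD2_def by (simp add: LD_const)
qed

lemma LD2_add:
  fixes S :: "(real^2) set"
  assumes "open S" "LD2 S f" "LD2 S g" shows "LD2 S (\<lambda>y. f y + g y)"
  unfolding LD2_def
proof safe
  show "LD S (\<lambda>y. f y + g y)" using assms LD2_LD LD_add by blast
  fix i show "LD S (pd i (\<lambda>y. f y + g y))"
    apply (rule LD_cong[OF assms(1), where g="\<lambda>y. pd i f y + pd i g y"])
     apply (rule pd_add[OF LD2_LD[OF assms(2)] LD2_LD[OF assms(3)]], assumption)
    by (intro LD_add LD2_pd assms)
qed

lemma LD2_diff: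
  fixes S :: "(real^2) set"
  assumes "open S" "LD2 S f" "LD2 S g" shows "LD2 S (\<lambda>y. f y - g y)"
  unfolding LD2_def
proof safe
  show "LD S (\<lambda>y. f y - g y)" using assms LD2_LD LD_diff by blast
  fix i show "LD S (pd i (\<lambda>y. f y - g y))"
    apply (rule LD_cong[OF assms(1), where g="\<lambda>y. pd i f y - pd i g y"])
     apply (rule pd_diff[OF LD2_LD[OF assms(2)] LD2_LD[OF assms(3)]], assumption)
    by (intro LD_diff LD2_pd assms)
qed

lemma LD2_mult:
  fixes S :: "(real^2) set"
  assumes "open S" "LD2 S f" "LD2 S g" shows "LD2 S (\<lambda>y. f y * g y)"
  unfolding LD2_def
proof safe
  show "LD S (\<lambda>y. f y * g y)" using assms LD2_LD LD_mult by blast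
  fix i show "LD S (pd i (\<lambda>y. f y * g y))"
    apply (rule LD_cong[OF assms(1), where g="\<lambda>y. pd i f y * g y + f y * pd i g y"])
     apply (rule pd_mult[OF LD2_LD[OF assms(2)] LD2_LD[OF assms(3)]], assumption)
    by (intro LD_add LD_mult LD2_pd LD2_LD assms)
qed

lemma LD2_divide:
  fixes S :: "(real^2) set"
  assumes "open S" "LD2 S f" "LD2 S g" "\<forall>z\<in>S. g z \<noteq> 0" shows "LD2 S (\<lambda>y. f y / g y)"
  unfolding LD2_def
proof safe
  show "LD S (\<lambda>y. f y / g y)" using assms LD2_LD LD_divide by blast
  fix i show "LD S (pd i (\<lambda>y. f y / g y))"
    apply (rule LD_cong[OF assms(1), where g="\<lambda>y. (pd i f y * g y - f y * pd i g y) / (g y)^2"])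
     apply (rule pd_divide[OF LD2_LD[OF assms(2)] LD2_LD[OF assms(3)] assms(4)], assumption)
    using assms(4) by (intro LD_divide LD_diff LD_power LD_mult LD2_pd LD2_LD assms) auto
qed

lemma LD2_power:
  fixes S :: "(real^2) set"
  assumes "open S" "LD2 S f" shows "LD2 S (\<lambda>y. f y ^ n)"
  unfolding LD2_def
proof safe
  show "LD S (\<lambda>y. f y ^ n)" using assms LD2_LD LD_power by blast
  fix i show "LD S (pd i (\<lambda>y. f y ^ n))"
    apply (rule LD_cong[OF assms(1), where g="\<lambda>y. of_nat n * pd i f y * f y ^ (n - 1)"])
     apply (rule pd_power[OF LD2_LD[OF assms(2)]], assumption)
    by (intro LD_power LD_mult LD_const LD2_pd LD2_LD assms)
qed

lemma LD2_sqrt: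
  fixes S :: "(real^2) set"
  assumes "open S" "LD2 S f" "\<forall>z\<in>S. f z > 0" shows "LD2 S (\<lambda>y. sqrt (f y))"
  unfolding LD2_def
proof safe
  show "LD S (\<lambda>y. sqrt (f y))" using assms LD2_LD LD_sqrt by blast
  fix i show "LD S (pd i (\<lambda>y. sqrt (f y)))"
    apply (rule LD_cong[OF assms(1), where g="\<lambda>y. pd i f y / (2 * sqrt (f y))"])
     apply (rule pd_sqrt[OF LD2_LD[OF assms(2)] assms(3)], assumption)
    using assms(3) by (intro LD_divide LD_sqrt LD_mult LD_const LD2_pd LD2_LD assms) auto
qed

lemma LD2_sum:
  fixes S :: "(real^2) set"
  assumes "open S" "finite A" "\<And>a. a \<in> A \<Longrightarrow> LD2 S (f a)" shows "LD2 S (\<lambda>y. \<Sum>a\<in>A. f a y)"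
  unfolding LD2_def
proof safe
  show "LD S (\<lambda>y. \<Sum>a\<in>A. f a y)" using assms LD2_LD LD_sum by blast
  fix i show "LD S (pd i (\<lambda>y. \<Sum>a\<in>A. f a y))"
    apply (rule LD_cong[OF assms(1), where g="\<lambda>y. \<Sum>a\<in>A. pd i (f a) y"])
     apply (rule pd_sum[OF assms(2)], rule LD2_LD[OF assms(3)], assumption, assumption)
    by (intro LD_sum LD2_pd assms)
qed


fun pf :: "(nat \<times> nat) list \<Rightarrow> nat \<Rightarrow> nat" where
  "pf [] p = p"
| "pf ((a,b)#ps) p = (if p = a then b else if p = b then a else pf ps p)"

definition tsum :: "nat \<Rightarrow> (real \<times> (nat \<times> nat) list) list \<Rightarrow> 2 list \<Rightarrow> real" where
  "tsum m ts js = (\<Sum>t\<leftarrow>ts. fst t * (if \<forall>p<m. js!p = js!(pf (snd t) p) then 1 else 0))"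

lemma finite_pairings: "finite (pairings m)"
proof -
  have "pairings m \<subseteq> (\<lambda>f p. if p < m then f p else p) ` ({..<m} \<rightarrow>\<^sub>E {..<m})"
  proof
    fix \<sigma> assume s: "\<sigma> \<in> pairings m"
    have "\<sigma> = (\<lambda>p. if p < m then restrict \<sigma> {..<m} p else p)"
      using s by (auto simp: pairings_def)
    moreover have "restrict \<sigma> {..<m} \<in> {..<m} \<rightarrow>\<^sub>E {..<m}"
      using s by (auto simp: pairings_def)
    ultimately show "\<sigma> \<in> (\<lambda>f p. if p < m then f p else p) ` ({..<m} \<rightarrow>\<^sub>E {..<m})" by blast
  qed
  moreover have "finite ({..<m} \<rightarrow>\<^sub>E {..<m})" by (intro finite_PiE) auto
  ultimately show ?thesis by (rule finite_subset[OF _ finite_imageI])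
qed

lemma ct_sum_aux:
  fixes X :: "(nat \<Rightarrow> nat) \<Rightarrow> real" and ts :: "(real \<times> (nat \<times> nat) list) list"
  assumes "\<forall>t\<in>set ts. pf (snd t) \<in> pairings m"
  shows "(\<Sum>\<sigma>\<in>pairings m. (\<Sum>t\<leftarrow>ts. if pf (snd t) = \<sigma> then fst t else 0) * X \<sigma>)
       = (\<Sum>t\<leftarrow>ts. fst t * X (pf (snd t)))"
  using assms
proof (induction ts)
  case Nil then show ?case by simp
next
  case (Cons t ts)
  have "(\<Sum>\<sigma>\<in>pairings m. (\<Sum>t\<leftarrow>t#ts. if pf (snd t) = \<sigma> then fst t else 0) * X \<sigma>)
     = (\<Sum>\<sigma>\<in>pairings m. (if pf (snd t) = \<sigma> then fst t * X \<sigma> else 0))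
       + (\<Sum>\<sigma>\<in>pairings m. (\<Sum>t\<leftarrow>ts. if pf (snd t) = \<sigma> then fst t else 0) * X \<sigma>)"
    by (simp add: distrib_right sum.distrib) (auto intro!: sum.cong)
  also have "\<dots> = fst t * X (pf (snd t)) + (\<Sum>t\<leftarrow>ts. fst t * X (pf (snd t)))"
    using Cons by (simp add: finite_pairings)
  finally show ?case by simp
qed

lemma ct_tsum:
  assumes "\<forall>t\<in>set ts. pf (snd t) \<in> pairings m"
  shows "contraction_tensor m (tsum m ts)"
  unfolding contraction_tensor_def
  apply (rule exI[of _ "\<lambda>\<sigma>. (\<Sum>t\<leftarrow>ts. if pf (snd t) = \<sigma> then fst t else 0)"])
  unfolding tsum_def
  using ct_sum_aux[OF assms] by simp

lemma all_lt_num: "(\<forall>p<numeral k. P p) \<longleftrightarrow> (\<forall>p<pred_numeral k. P p) \<and> P (pred_numeral k)"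
proof -
  have "\<And>n. (\<forall>p<Suc n. P p) \<longleftrightarrow> (\<forall>p<n. P p) \<and> P n" by (auto simp: less_Suc_eq)
  then show ?thesis by (simp only: numeral_eq_Suc)
qed
lemma all_lt_0: "(\<forall>p<(0::nat). P p) \<longleftrightarrow> True" by simp
lemma all_lt_1: "(\<forall>p<(1::nat). P p) \<longleftrightarrow> P 0" by auto

lemma prod_lt_num: "(\<Prod>p<numeral k. f p) = (\<Prod>p<pred_numeral k. f p) * (f (pred_numeral k) :: real)"
  by (simp add: numeral_eq_Suc)

lemma idx_Suc: "idx_lists (Suc n) = (\<lambda>(a,js). a#js) ` (UNIV \<times> idx_lists n)"
  unfolding idx_lists_def by (auto simp: image_iff length_Suc_conv)

lemma idx_sum_Suc: "sum f (idx_lists (Suc n)) = (\<Sum>a\<in>UNIV. sum (\<lambda>js. f (a#js)) (idx_lists n))"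
proof -
  have "inj_on (\<lambda>(a,js). a#js) (UNIV \<times> idx_lists n)" by (auto simp: inj_on_def)
  then have "sum f ((\<lambda>(a,js). a#js) ` (UNIV \<times> idx_lists n)) = sum (f \<circ> (\<lambda>(a,js). a#js)) (UNIV \<times> idx_lists n)"
    by (rule sum.reindex)
  then show ?thesis
    unfolding idx_Suc by (simp add: sum.cartesian_product comp_def case_prod_beta)
qed

lemma idx_sum_num: "sum f (idx_lists (numeral k)) = (\<Sum>a\<in>UNIV. sum (\<lambda>js. f (a#js)) (idx_lists (pred_numeral k)))"
  by (simp add: numeral_eq_Suc idx_sum_Suc)
lemma idx0: "idx_lists 0 = {[]}" by (auto simp: idx_lists_def)
lemma idx_sum_0: "sum f (idx_lists 0) = f []"
  by (simp add: idx_lists_def)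
lemma idx_sum_1: "sum f (idx_lists 1) = (\<Sum>a\<in>UNIV. f [a])"
  using idx_sum_Suc[of f 0] by (simp add: idx_sum_0)

lemma Qpos: "Qf u y > 0"
  unfolding Qf_def by (simp add: add_pos_nonneg sum_nonneg)
lemma Qnz[simp]: "Qf u y \<noteq> 0" using Qpos[of u y] by simp
lemma Qnz1[simp]: "1 + Qf u y \<noteq> 0" using Qpos[of u y] by simp

definition "ts21 = [(1::real, [(0::nat,1::nat),(2,4),(3,5)]), (1, [(0,4),(1,5),(2,3)])]"
definition "ts22 = [(-1::real, [(0::nat,6::nat),(1,7),(2,4),(3,5)])]"
definition "ts3 = [(1::real, [(0::nat,1::nat),(2,3),(4,5)])]"
definition "T2f k = (if k = (1::nat) then tsum 6 ts21 else tsum 8 ts22)"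
definition "T3f = tsum 6 ts3"

lemmas evsimps = idx0 idx_sum_Suc idx_sum_num idx_sum_1 idx_sum_0 all_lt_num all_lt_1 all_lt_0 prod_lt_num sum_2 tsum_def

definition "ts11 = [(-1::real, [(0::nat,1::nat),(2,5),(3,4)]), (-1, [(0,2),(1,5),(3,4)]), (-1/2, [(0,5),(1,2),(3,4)])]"
definition "ts12 = [(3::real, [(1::nat,2::nat),(3,5),(4,6),(0,7)]), (1, [(0,1),(2,5),(3,6),(4,7)]), (1, [(0,2),(1,5),(3,6),(4,7)])]"
definition "ts13 = [(-5/2::real, [(1::nat,5::nat),(2,6),(3,7),(4,8),(0,9)])]"
definition "T1f k = (if k = (1::nat) then tsum 6 ts11 else if k = 2 then tsum 8 ts12 else tsum 10 ts13)"


lemma two_ne[simp]: "(1::2) \<noteq> 2" "(2::2) \<noteq> 1" by simp_all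

lemma b1_split: "b1 T u y i =
    (\<Sum>js\<in>idx_lists 5. T 1 (i#js) * pd (js!0) (pd (js!1) u) y * pd (js!2) (pd (js!3) u) y * (\<Prod>p<1. pd (js!(4+p)) u y)) / (Qf u y)^3
  + (\<Sum>js\<in>idx_lists 7. T 2 (i#js) * pd (js!0) (pd (js!1) u) y * pd (js!2) (pd (js!3) u) y * (\<Prod>p<3. pd (js!(4+p)) u y)) / (Qf u y)^5
  + (\<Sum>js\<in>idx_lists 9. T 3 (i#js) * pd (js!0) (pd (js!1) u) y * pd (js!2) (pd (js!3) u) y * (\<Prod>p<5. pd (js!(4+p)) u y)) / (Qf u y)^7"
  by (simp add: b1_def) (simp add: power_Suc[symmetric])

lemma b2_split: "b2 T T3 u y i j =
    (\<Sum>js\<in>idx_lists 4. T 1 (i#j#js) * pd (js!0) (pd (js!1) u) y * (\<Prod>p<2. pd (js!(2+p)) u y)) / (Qf u y)^3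
  + (\<Sum>js\<in>idx_lists 6. T 2 (i#j#js) * pd (js!0) (pd (js!1) u) y * (\<Prod>p<4. pd (js!(2+p)) u y)) / (Qf u y)^5
  + (\<Sum>js\<in>idx_lists 4. T3 (i#j#js) * pd (js!0) (pd (js!1) u) y * pd (js!2) u y * pd (js!3) u y) / (Qf u y * (1 + Qf u y))"
  by (simp add: b2_def) (simp add: power_Suc[symmetric])


definition "Lc u y = (\<Sum>a\<in>UNIV. pd a (pd a u) y)"
definition "Fc u y = (\<Sum>a\<in>UNIV. \<Sum>b\<in>UNIV. pd a (pd b u) y * pd a u y * pd b u y)"
definition "S1c u y i = - (\<Sum>k\<in>UNIV. pd k u y * pd i (pd k u) y) * Lc u y - (\<Sum>m\<in>UNIV. pd m (pd i u) y * pd m u y) * Lc u y - 1/2 * pd i u y * (Lc u y)^2"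
definition "S2c u y i = 3 * pd i u y * Lc u y * Fc u y + (\<Sum>k\<in>UNIV. pd k u y * pd i (pd k u) y) * Fc u y + (\<Sum>m\<in>UNIV. pd m u y * pd m (pd i u) y) * Fc u y"
definition "S3c u y i = - 5/2 * pd i u y * (Fc u y)^2"
definition "B21c u y i j = (if i = j then 1 else 0) * Fc u y + pd i u y * pd j u y * Lc u y"
definition "B22c u y i j = - pd i u y * pd j u y * Fc u y"
definition "B3c u y (i::2) (j::2) = (if i = j then 1 else 0) * Lc u y * (\<Sum>a\<in>UNIV. pd a u y * pd a u y)"

lemmas cdefs = Lc_def Fc_def S1c_def S2c_def S3c_def B21c_def B22c_def B3c_def

lemma N1_1_1: "(\<Sum>js\<in>idx_lists 5. T1f 1 (1#js) * pd (js!0) (pd (js!1) u) y * pd (js!2) (pd (js!3) u) y * (\<Prod>p<1. pd (js!(4+p)) u y)) = S1c u y 1"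
  unfolding T1f_def ts11_def cdefs by (simp add: evsimps; algebra)

lemma N1_1_2: "(\<Sum>js\<in>idx_lists 7. T1f 2 (1#js) * pd (js!0) (pd (js!1) u) y * pd (js!2) (pd (js!3) u) y * (\<Prod>p<3. pd (js!(4+p)) u y)) = S2c u y 1"
  unfolding T1f_def ts12_def cdefs by (simp add: evsimps; algebra)

lemma N1_1_3: "(\<Sum>js\<in>idx_lists 9. T1f 3 (1#js) * pd (js!0) (pd (js!1) u) y * pd (js!2) (pd (js!3) u) y * (\<Prod>p<5. pd (js!(4+p)) u y)) = S3c u y 1"
  unfolding T1f_def ts13_def cdefs by (simp add: evsimps; algebra)

lemma N1_2_1: "(\<Sum>js\<in>idx_lists 5. T1f 1 (2#js) * pd (js!0) (pd (js!1) u) y * pd (js!2) (pd (js!3) u) y * (\<Prod>p<1. pd (js!(4+p)) u y)) = S1c u y 2"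
  unfolding T1f_def ts11_def cdefs by (simp add: evsimps; algebra)

lemma N1_2_2: "(\<Sum>js\<in>idx_lists 7. T1f 2 (2#js) * pd (js!0) (pd (js!1) u) y * pd (js!2) (pd (js!3) u) y * (\<Prod>p<3. pd (js!(4+p)) u y)) = S2c u y 2"
  unfolding T1f_def ts12_def cdefs by (simp add: evsimps; algebra)

lemma N1_2_3: "(\<Sum>js\<in>idx_lists 9. T1f 3 (2#js) * pd (js!0) (pd (js!1) u) y * pd (js!2) (pd (js!3) u) y * (\<Prod>p<5. pd (js!(4+p)) u y)) = S3c u y 2"
  unfolding T1f_def ts13_def cdefs by (simp add: evsimps; algebra)

lemma N2_1_11: "(\<Sum>js\<in>idx_lists 4. T2f 1 (1#1#js) * pd (js!0) (pd (js!1) u) y * (\<Prod>p<2. pd (js!(2+p)) u y)) = B21c u y 1 1"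
  unfolding T2f_def T3f_def ts21_def cdefs by (simp add: evsimps; algebra)

lemma N2_2_11: "(\<Sum>js\<in>idx_lists 6. T2f 2 (1#1#js) * pd (js!0) (pd (js!1) u) y * (\<Prod>p<4. pd (js!(2+p)) u y)) = B22c u y 1 1"
  unfolding T2f_def T3f_def ts22_def cdefs by (simp add: evsimps; algebra)

lemma N3_11: "(\<Sum>js\<in>idx_lists 4. T3f (1#1#js) * pd (js!0) (pd (js!1) u) y * pd (js!2) u y * pd (js!3) u y) = B3c u y 1 1"
  unfolding T2f_def T3f_def ts3_def cdefs by (simp add: evsimps; algebra)

lemma N2_1_12: "(\<Sum>js\<in>idx_lists 4. T2f 1 (1#2#js) * pd (js!0) (pd (js!1) u) y * (\<Prod>p<2. pd (js!(2+p)) u y)) = B21c u y 1 2"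
  unfolding T2f_def T3f_def ts21_def cdefs by (simp add: evsimps; algebra)

lemma N2_2_12: "(\<Sum>js\<in>idx_lists 6. T2f 2 (1#2#js) * pd (js!0) (pd (js!1) u) y * (\<Prod>p<4. pd (js!(2+p)) u y)) = B22c u y 1 2"
  unfolding T2f_def T3f_def ts22_def cdefs by (simp add: evsimps; algebra)

lemma N3_12: "(\<Sum>js\<in>idx_lists 4. T3f (1#2#js) * pd (js!0) (pd (js!1) u) y * pd (js!2) u y * pd (js!3) u y) = B3c u y 1 2"
  unfolding T2f_def T3f_def ts3_def cdefs by (simp add: evsimps; algebra)

lemma N2_1_21: "(\<Sum>js\<in>idx_lists 4. T2f 1 (2#1#js) * pd (js!0) (pd (js!1) u) y * (\<Prod>p<2. pd (js!(2+p)) u y)) = B21c u y 2 1"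
  unfolding T2f_def T3f_def ts21_def cdefs by (simp add: evsimps; algebra)

lemma N2_2_21: "(\<Sum>js\<in>idx_lists 6. T2f 2 (2#1#js) * pd (js!0) (pd (js!1) u) y * (\<Prod>p<4. pd (js!(2+p)) u y)) = B22c u y 2 1"
  unfolding T2f_def T3f_def ts22_def cdefs by (simp add: evsimps; algebra)

lemma N3_21: "(\<Sum>js\<in>idx_lists 4. T3f (2#1#js) * pd (js!0) (pd (js!1) u) y * pd (js!2) u y * pd (js!3) u y) = B3c u y 2 1"
  unfolding T2f_def T3f_def ts3_def cdefs by (simp add: evsimps; algebra)

lemma N2_1_22: "(\<Sum>js\<in>idx_lists 4. T2f 1 (2#2#js) * pd (js!0) (pd (js!1) u) y * (\<Prod>p<2. pd (js!(2+p)) u y)) = B21c u y 2 2"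
  unfolding T2f_def T3f_def ts21_def cdefs by (simp add: evsimps; algebra)

lemma N2_2_22: "(\<Sum>js\<in>idx_lists 6. T2f 2 (2#2#js) * pd (js!0) (pd (js!1) u) y * (\<Prod>p<4. pd (js!(2+p)) u y)) = B22c u y 2 2"
  unfolding T2f_def T3f_def ts22_def cdefs by (simp add: evsimps; algebra)

lemma N3_22: "(\<Sum>js\<in>idx_lists 4. T3f (2#2#js) * pd (js!0) (pd (js!1) u) y * pd (js!2) u y * pd (js!3) u y) = B3c u y 2 2"
  unfolding T2f_def T3f_def ts3_def cdefs by (simp add: evsimps; algebra)

lemma b1_eval: "b1 T1f u y i = S1c u y i / (Qf u y)^3 + S2c u y i / (Qf u y)^5 + S3c u y i / (Qf u y)^7"
  using exhaust_2[of i] by (elim disjE) (simp_all only: b1_split N1_1_1 N1_1_2 N1_1_3 N1_2_1 N1_2_2 N1_2_3)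

lemma b2_eval: "b2 T2f T3f u y i j = B21c u y i j / (Qf u y)^3 + B22c u y i j / (Qf u y)^5 + B3c u y i j / (Qf u y * (1 + Qf u y))"
  using exhaust_2[of i] exhaust_2[of j] by (elim disjE) (simp_all only: b2_split N2_1_11 N2_2_11 N3_11 N2_1_12 N2_2_12 N3_12 N2_1_21 N2_2_21 N3_21 N2_1_22 N2_2_22 N3_22)


lemma ct_all: "(\<forall>k\<in>{1,2,3::nat}. contraction_tensor (2*k + 4) (T1f k)) \<and>
     (\<forall>k\<in>{1,2::nat}. contraction_tensor (2*k + 4) (T2f k)) \<and> contraction_tensor 6 T3f"
  unfolding T1f_def T2f_def T3f_def
  by (simp add: ct_tsum ts11_def ts12_def ts13_def ts21_def ts22_def ts3_def pairings_def all_lt_num all_lt_1)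


lemmas calc = LD_const pd_const LD_add pd_add LD_diff pd_diff LD_minus pd_minus LD_mult pd_mult
  LD_divide pd_divide LD_power pd_power LD_sqrt pd_sqrt LD_sum pd_sum

lemma Qge1: "Qf u y \<ge> 1"
  unfolding Qf_def by (simp add: sum_nonneg)
lemma Qsq: "(Qf u y)^2 = 1 + (\<Sum>i\<in>UNIV. (pd i u y)\<^sup>2)"
  unfolding Qf_def by (simp add: add_nonneg_nonneg sum_nonneg)

locale W =
  fixes \<Omega> :: "(real^2) set" and u :: "real^2 \<Rightarrow> real"
  assumes op: "open \<Omega>"
    and L0[simp]: "LD \<Omega> u"
    and L1[simp]: "LD \<Omega> (pd a u)"
    and L2[simp]: "LD \<Omega> (pd a (pd b u))"
    and L3[simp]: "LD \<Omega> (pd a (pd b (pd c u)))"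
begin

lemmas calcW = pd_const LD_const[where S=\<Omega>] LD_add[where S=\<Omega>] pd_add[where S=\<Omega>] LD_diff[where S=\<Omega>] pd_diff[where S=\<Omega>] LD_minus[where S=\<Omega>] pd_minus[where S=\<Omega>] LD_mult[where S=\<Omega>] pd_mult[where S=\<Omega>] LD_divide[where S=\<Omega>] pd_divide[where S=\<Omega>] LD_power[where S=\<Omega>] pd_power[where S=\<Omega>] LD_sqrt[where S=\<Omega>] pd_sqrt[where S=\<Omega>] LD_sum[where S=\<Omega>] pd_sum[where S=\<Omega>]

lemma Qf_eq: "Qf u = (\<lambda>y. sqrt (1 + (\<Sum>i\<in>UNIV. (pd i u y)^2)))"
  by (rule ext) (simp add: Qf_def)

lemma LD_Q[simp]: "LD \<Omega> (Qf u)"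
  unfolding Qf_eq by (simp add: calcW add_pos_nonneg sum_nonneg)

lemma pd_Q[simp]: "y \<in> \<Omega> \<Longrightarrow> pd i (Qf u) y = (\<Sum>a\<in>UNIV. pd a u y * pd i (pd a u) y) / Qf u y"
  unfolding Qf_eq
  apply (simp add: calcW add_pos_nonneg sum_nonneg)
  using Qpos[of u y] unfolding Qf_def
  apply (simp add: sum_2 field_simps)
  done

lemmas calc2W = LD2_const LD2_add[OF op] LD2_diff[OF op] LD2_mult[OF op] LD2_divide[OF op]
  LD2_power[OF op] LD2_sqrt[OF op] LD2_sum[OF op]

lemma LD2_1[simp]: "LD2 \<Omega> (pd a u)" unfolding LD2_def by simp
lemma LD2_2[simp]: "LD2 \<Omega> (pd a (pd b u))" unfolding LD2_def by simp

lemma LD2_Q[simp]: "LD2 \<Omega> (Qf u)"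
  unfolding Qf_eq by (simp add: calc2W add_pos_nonneg sum_nonneg)

definition lap where "lap y = (\<Sum>j\<in>UNIV. pd j (pd j u) y)"
definition Fq where "Fq y = (\<Sum>i\<in>UNIV. \<Sum>a\<in>UNIV. pd i u y * pd a u y * pd i (pd a u) y)"

lemma lap_eq: "lap = (\<lambda>y. \<Sum>j\<in>UNIV. pd j (pd j u) y)" by (rule ext) (simp add: lap_def)
lemma Fq_eq: "Fq = (\<lambda>y. \<Sum>i\<in>UNIV. \<Sum>a\<in>UNIV. pd i u y * pd a u y * pd i (pd a u) y)" by (rule ext) (simp add: Fq_def)

lemma LD2_lap[simp]: "LD2 \<Omega> lap" unfolding lap_eq by (simp add: calc2W)
lemma LD2_Fq[simp]: "LD2 \<Omega> Fq" unfolding Fq_eq by (simp add: calc2W)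

lemma Hf_cl: "y \<in> \<Omega> \<Longrightarrow> Hf u y = lap y / Qf u y - Fq y / Qf u y ^ 3"
  unfolding Hf_def lap_def Fq_def
  apply (simp add: calcW)
  apply (simp add: sum_2 field_simps power2_eq_square power3_eq_cube)
  done

lemma LD2_H[simp]: "LD2 \<Omega> (Hf u)"
  by (rule LD2_cong[OF op Hf_cl]) (auto simp: calc2W)

lemma LD_Q'[simp]: "LD \<Omega> (Qf u)" by (rule LD2_LD) simp
lemma LD_H[simp]: "LD \<Omega> (Hf u)" by (rule LD2_LD) simp
lemma LD_lap[simp]: "LD \<Omega> lap" by (rule LD2_LD) simp
lemma LD_pd_lap[simp]: "LD \<Omega> (pd i lap)" by (rule LD2_pd) simp

definition A where "A i m y = (1 / Qf u y) * ((if i = m then 1 else 0) - pd i u y * pd m u y / (Qf u y)\<^sup>2)"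
lemma A_eq: "A i m = (\<lambda>y. (1 / Qf u y) * ((if i = m then 1 else 0) - pd i u y * pd m u y / (Qf u y)\<^sup>2))"
  by (rule ext) (simp add: A_def)
lemma LD2_A[simp]: "LD2 \<Omega> (A i m)" unfolding A_eq by (simp add: calc2W)
lemma LD_A[simp]: "LD \<Omega> (A i m)" by (rule LD2_LD) simp

definition b2c where "b2c i m y = (if i = m then 1 else 0) * lap y - A i m y * (Qf u y * Hf u y)"
definition b1c where "b1c i y = (\<Sum>m\<in>UNIV. pd m (A i m) y) * (Qf u y * Hf u y) + (Hf u y)\<^sup>2 / (2 * Qf u y) * pd i u y"

lemma b2c_eq: "b2c i m = (\<lambda>y. (if i = m then 1 else 0) * lap y - A i m y * (Qf u y * Hf u y))"
  by (rule ext) (simp add: b2c_def)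

lemma V_id:
  assumes y: "y \<in> \<Omega>"
  shows "(\<Sum>l\<in>UNIV. (1 / Qf u y) * ((if i = l then 1 else 0) - pd i u y * pd l u y / (Qf u y)\<^sup>2)
                   * pd l (\<lambda>z. Qf u z * Hf u z) y) - (Hf u y)\<^sup>2 / (2 * Qf u y) * pd i u y
       = pd i lap y - b1c i y - (\<Sum>m\<in>UNIV. pd m (b2c i m) y)"
  unfolding b2c_eq b1c_def
  using y apply (simp add: calcW del: pd_Q)
  apply (simp add: sum_2 A_def)
  using exhaust_2[of i] apply (elim disjE; simp add: field_simps)
  done


lemma LD_pdA[simp]: "LD \<Omega> (pd m (A i m))" by (rule LD2_pd) simp

lemma b1c_eq: "b1c i = (\<lambda>y. (\<Sum>m\<in>UNIV. pd m (A i m) y) * (Qf u y * Hf u y) + (Hf u y)\<^sup>2 / (2 * Qf u y) * pd i u y)"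
  by (rule ext) (simp add: b1c_def)

lemma LD_b1c[simp]: "LD \<Omega> (b1c i)" unfolding b1c_eq by (simp add: calcW)
lemma LD2_b2c[simp]: "LD2 \<Omega> (b2c i m)" unfolding b2c_eq by (simp add: calc2W)
lemma LD_pd_b2c[simp]: "LD \<Omega> (pd j (b2c i m))" by (rule LD2_pd) simp

lemma B3c_alt: "B3c u y i j = (if i = j then 1 else 0) * Lc u y * ((Qf u y)^2 - 1)"
  unfolding B3c_def Qsq by (simp add: power2_eq_square)

lemma b2c_b2: "y \<in> \<Omega> \<Longrightarrow> b2c i m y = b2 T2f T3f u y i m"
  unfolding b2_eval B3c_alt b2c_def A_def
  apply (simp add: Hf_cl)
  apply (simp add: lap_def Fq_def B21c_def B22c_def Lc_def Fc_def sum_2)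
  using exhaust_2[of i] exhaust_2[of m] apply (elim disjE; hypsubst_thin)
  apply (simp add: divide_simps, algebra)+
  done

lemma b1c_b1: "y \<in> \<Omega> \<Longrightarrow> b1c i y = b1 T1f u y i"
  unfolding b1_eval b1c_def
  apply (simp add: A_eq calcW del: pd_Q)
  apply (simp add: Hf_cl)
  apply (simp add: lap_def Fq_def S1c_def S2c_def S3c_def Lc_def Fc_def sum_2)
  using exhaust_2[of i] apply (elim disjE; hypsubst_thin)
  apply (simp add: divide_simps)
  apply algebra
  apply (simp add: divide_simps)
  apply algebra
  done


lemma pd_lap_cl: "z \<in> \<Omega> \<Longrightarrow> pd i lap z = (\<Sum>j\<in>UNIV. pd i (pd j (pd j u)) z)"
  unfolding lap_eq by (simp add: calcW)

lemma main:
  assumes x: "x \<in> \<Omega>"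
  shows "willmore_lhs u x = bilap u x - (\<Sum>i\<in>UNIV. pd i (\<lambda>y. b1 T1f u y i) x)
            - (\<Sum>i\<in>UNIV. \<Sum>j\<in>UNIV. pd i (pd j (\<lambda>y. b2 T2f T3f u y i j)) x)"
proof -
  have 1: "pd i (\<lambda>y. (\<Sum>l\<in>UNIV. (1 / Qf u y) * ((if i = l then 1 else 0) - pd i u y * pd l u y / (Qf u y)\<^sup>2)
                   * pd l (\<lambda>z. Qf u z * Hf u z) y) - (Hf u y)\<^sup>2 / (2 * Qf u y) * pd i u y) x
     = pd i (\<lambda>y. pd i lap y - b1c i y - (\<Sum>m\<in>UNIV. pd m (b2c i m) y)) x" for i
    by (rule pd_cong[OF op x]) (rule V_id)
  have 2: "pd i (\<lambda>y. pd i lap y - b1c i y - (\<Sum>m\<in>UNIV. pd m (b2c i m) y)) x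
     = pd i (pd i lap) x - pd i (b1c i) x - (\<Sum>m\<in>UNIV. pd i (pd m (b2c i m)) x)" for i
    using x by (simp add: calcW)
  have 3: "pd i (pd i lap) x = (\<Sum>j\<in>UNIV. pd i (pd i (pd j (pd j u))) x)" for i
  proof -
    have "pd i (pd i lap) x = pd i (\<lambda>z. \<Sum>j\<in>UNIV. pd i (pd j (pd j u)) z) x"
      by (rule pd_cong[OF op x]) (rule pd_lap_cl)
    then show ?thesis using x by (simp add: calcW)
  qed
  have 4: "pd i (b1c i) x = pd i (\<lambda>y. b1 T1f u y i) x" for i
    by (rule pd_cong[OF op x]) (rule b1c_b1)
  have 5: "pd i (pd m (b2c i m)) x = pd i (pd m (\<lambda>y. b2 T2f T3f u y i m)) x" for i m
    by (rule pd_cong[OF op x]) (rule pd_cong[OF op], assumption, rule b2c_b2)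
  show ?thesis
    unfolding willmore_lhs_def bilap_def 1 2 3 4 5 by (simp add: sum_subtractf)
qed

end

lemma Ck_LD: "Ck (Suc k) \<Omega> f \<Longrightarrow> LD \<Omega> f" by (simp add: LD_def)
lemma Ck_pd: "Ck (Suc k) \<Omega> f \<Longrightarrow> Ck k \<Omega> (pd i f)" by simp

theorem lemma1:
  shows "\<exists>T1 T2 T3.
     (\<forall>k\<in>{1,2,3::nat}. contraction_tensor (2*k + 4) (T1 k)) \<and>
     (\<forall>k\<in>{1,2::nat}. contraction_tensor (2*k + 4) (T2 k)) \<and>
     contraction_tensor 6 T3 \<and>
     (\<forall>(\<Omega>::(real^2) set) (u::real^2 \<Rightarrow> real). open \<Omega> \<longrightarrow> Ck 4 \<Omega> u \<longrightarrow>
        (\<forall>x\<in>\<Omega>. willmore_lhs u x =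
            bilap u x
            - (\<Sum>i\<in>UNIV. pd i (\<lambda>y. b1 T1 u y i) x)
            - (\<Sum>i\<in>UNIV. \<Sum>j\<in>UNIV. pd i (pd j (\<lambda>y. b2 T2 T3 u y i j)) x)))"
proof -
  have "\<forall>(\<Omega>::(real^2) set) (u::real^2 \<Rightarrow> real). open \<Omega> \<longrightarrow> Ck 4 \<Omega> u \<longrightarrow>
        (\<forall>x\<in>\<Omega>. willmore_lhs u x =
            bilap u x
            - (\<Sum>i\<in>UNIV. pd i (\<lambda>y. b1 T1f u y i) x)
            - (\<Sum>i\<in>UNIV. \<Sum>j\<in>UNIV. pd i (pd j (\<lambda>y. b2 T2f T3f u y i j)) x))"
  proof (intro allI impI ballI)
    fix \<Omega> :: "(real^2) set" and u :: "real^2 \<Rightarrow> real" and x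
    assume o: "open \<Omega>" and c: "Ck 4 \<Omega> u" and x: "x \<in> \<Omega>"
    have c4: "Ck (Suc 3) \<Omega> u" using c by simp
    have e3: "(3::nat) = Suc 2" and e2: "(2::nat) = Suc 1" and e1: "(1::nat) = Suc 0" by simp_all
    have c3: "Ck (Suc 2) \<Omega> (pd a u)" for a using Ck_pd[OF c4, of a] by (simp only: e3)
    have c2: "Ck (Suc 1) \<Omega> (pd b (pd a u))" for a b using Ck_pd[OF c3[of a], of b] by (simp only: e2)
    have c1: "Ck (Suc 0) \<Omega> (pd c (pd b (pd a u)))" for a b c using Ck_pd[OF c2[of b a], of c] by (simp only: e1)
    interpret W \<Omega> u
      by unfold_locales (auto intro: o Ck_LD[OF c4] Ck_LD[OF c3] Ck_LD[OF c2] Ck_LD[OF c1])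
    show "willmore_lhs u x = bilap u x - (\<Sum>i\<in>UNIV. pd i (\<lambda>y. b1 T1f u y i) x)
            - (\<Sum>i\<in>UNIV. \<Sum>j\<in>UNIV. pd i (pd j (\<lambda>y. b2 T2f T3f u y i j)) x)"
      by (rule main[OF x])
  qed
  then show ?thesis using ct_all by blast
qed


end
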